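(* Let $R$ be a unital associative ring. For every $A\in\widehat{\cal S}$ there is $x=x(A)\in R^*$ such that $\Phi^2(A)=x^{-1}\Phi^{-1}(A)x$. In particular, $\Phi^2(A)\sim\Phi^{-1}(A)$.
   Context: $R^*$: units of $R$. $M_3^*(R)$: invertible $3\times3$ matrices; $M_3^\star(R)$: matrices with all entries in $R^*$. $J_1(M)=M^{-1}$ on $M_3^*(R)$; $J_2(M)_{jk}=(M_{kj})^{-1}$ on $M_3^\star(R)$; $J=J_2\circ J_1$, $J^{-1}=J_1\circ J_2$, where $g\circ f$ has domain $\{x\in{\rm dom}(f):f(x)\in{\rm dom}(g)\}$. $\widehat M_3(R)$: matrices whose first row and column consist of $1$'s. For $A=\{a_{j,k}\}\in M_3^\star(R)$: $\Lambda^L(A)_{j,k}=a_{1,1}a_{j,1}^{-1}a_{j,k}a_{1,k}^{-1}$, $\Lambda^R(A)_{j,k}=a_{j,1}^{-1}a_{j,k}a_{1,k}^{-1}a_{1,1}$. $\Phi(A)=J_2(\Lambda^L(A^{-1}))$ with ${\rm dom}(\Phi)={\rm dom}(J)\cap\widehat M_3(R)\cap M_3^\star(R)$; $\Phi^2=\Phi\circ\Phi$; $\Phi^{-1}(A)=\Lambda^R(J^{-1}(A))$ with domain $\widehat M_3(R)\cap\{M\in{\rm dom}(J^{-1}):J^{-1}(M)\in M_3^\star(R)\}$. ${\cal S}=\{M\in M_3(R):$ all square submatrices of $M$ are invertible and $J_2(M)$ is invertible$\}$, $\widehat{\cal S}={\cal S}\cap\widehat M_3(R)$. For a matrix $B$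 and $x\in R^*$, $x^{-1}Bx$ is the matrix with entries $x^{-1}B_{jk}x$. $A\sim B$ means $B=D_1^{-1}AD_2$ for invertible diagonal $D_1,D_2$. *)

theory Defs
  imports Main "HOL-Library.Numeral_Type"
begin

text \<open>3x3 matrices over a unital associative ring 'a, indexed by the finite type 3
  (index 0 of type 3 corresponds to index 1 of the paper).
  Partial maps are modelled as option-valued functions.\<close>

type_synonym 'a mat3 = "3 \<Rightarrow> 3 \<Rightarrow> 'a"

definition is_runit :: "'a::{ring,monoid_mult} \<Rightarrow> bool" where
  "is_runit x \<longleftrightarrow> (\<exists>y. x * y = 1 \<and> y * x = 1)"

definition uinv :: "'a::{ring,monoid_mult} \<Rightarrow> 'a" where
  "uinv x = (THE y. x * y = 1 \<and> y * x = 1)"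

definition mmult :: "'a::{ring,monoid_mult} mat3 \<Rightarrow> 'a mat3 \<Rightarrow> 'a mat3" where
  "mmult A B = (\<lambda>j k. \<Sum>l\<in>UNIV. A j l * B l k)"

definition mone :: "'a::{ring,monoid_mult} mat3" where
  "mone = (\<lambda>j k. if j = k then 1 else 0)"

definition mat_invertible :: "'a::{ring,monoid_mult} mat3 \<Rightarrow> bool" where
  "mat_invertible A \<longleftrightarrow> (\<exists>B. mmult A B = mone \<and> mmult B A = mone)"

definition minv :: "'a::{ring,monoid_mult} mat3 \<Rightarrow> 'a mat3" where
  "minv A = (THE B. mmult A B = mone \<and> mmult B A = mone)"

text \<open>This does not depend on an ordering of I and K.\<close>
definition sub_invertible :: "'a::{ring,monoid_mult} mat3 \<Rightarrow> 3 set \<Rightarrow> 3 set \<Rightarrow> bool" where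
  "sub_invertible M I K \<longleftrightarrow>
     (\<exists>N :: 3 \<Rightarrow> 3 \<Rightarrow> 'a.
        (\<forall>i\<in>I. \<forall>i'\<in>I. (\<Sum>k\<in>K. M i k * N k i') = (if i = i' then 1 else 0)) \<and>
        (\<forall>k\<in>K. \<forall>k'\<in>K. (\<Sum>i\<in>I. N k i * M i k') = (if k = k' then 1 else 0)))"

definition all_units :: "'a::{ring,monoid_mult} mat3 \<Rightarrow> bool" where
  "all_units M \<longleftrightarrow> (\<forall>j k. is_runit (M j k))"

definition J1 :: "'a::{ring,monoid_mult} mat3 \<Rightarrow> 'a mat3 option" where
  "J1 M = (if mat_invertible M then Some (minv M) else None)"

definition J2 :: "'a::{ring,monoid_mult} mat3 \<Rightarrow> 'a mat3 option" where
  "J2 M = (if all_units M then Some (\<lambda>j k. uinv (M k j)) else None)"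

definition pcomp :: "('b \<Rightarrow> 'c option) \<Rightarrow> ('a \<Rightarrow> 'b option) \<Rightarrow> 'a \<Rightarrow> 'c option" where
  "pcomp g f x = (case f x of None \<Rightarrow> None | Some y \<Rightarrow> g y)"

definition J :: "'a::{ring,monoid_mult} mat3 \<Rightarrow> 'a mat3 option" where
  "J = pcomp J2 J1"

definition Jinv :: "'a::{ring,monoid_mult} mat3 \<Rightarrow> 'a mat3 option" where
  "Jinv = pcomp J1 J2"

definition hat :: "'a::{ring,monoid_mult} mat3 \<Rightarrow> bool" where
  "hat M \<longleftrightarrow> (\<forall>k. M 0 k = 1) \<and> (\<forall>j. M j 0 = 1)"

definition LambdaL :: "'a::{ring,monoid_mult} mat3 \<Rightarrow> 'a mat3" where
  "LambdaL A = (\<lambda>j k. A 0 0 * uinv (A j 0) * A j k * uinv (A 0 k))"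

definition LambdaR :: "'a::{ring,monoid_mult} mat3 \<Rightarrow> 'a mat3" where
  "LambdaR A = (\<lambda>j k. uinv (A j 0) * A j k * uinv (A 0 k) * A 0 0)"

definition Phi :: "'a::{ring,monoid_mult} mat3 \<Rightarrow> 'a mat3 option" where
  "Phi A = (if J A \<noteq> None \<and> hat A \<and> all_units A then J2 (LambdaL (minv A)) else None)"

definition Phi2 :: "'a::{ring,monoid_mult} mat3 \<Rightarrow> 'a mat3 option" where
  "Phi2 = pcomp Phi Phi"

definition Phi_inv :: "'a::{ring,monoid_mult} mat3 \<Rightarrow> 'a mat3 option" where
  "Phi_inv A = (if hat A \<and> (case Jinv A of None \<Rightarrow> False | Some B \<Rightarrow> all_units B)
                then Some (LambdaR (the (Jinv A))) else None)"

definition in_S :: "'a::{ring,monoid_mult} mat3 \<Rightarrow> bool" where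
  "in_S M \<longleftrightarrow>
     (\<forall>I K. I \<noteq> {} \<longrightarrow> card I = card K \<longrightarrow> sub_invertible M I K) \<and>
     (case J2 M of None \<Rightarrow> False | Some N \<Rightarrow> mat_invertible N)"

definition conj_mat :: "'a::{ring,monoid_mult} \<Rightarrow> 'a mat3 \<Rightarrow> 'a mat3" where
  "conj_mat x B = (\<lambda>j k. uinv x * B j k * x)"

definition is_diag :: "'a::{ring,monoid_mult} mat3 \<Rightarrow> bool" where
  "is_diag D \<longleftrightarrow> (\<forall>j k. j \<noteq> k \<longrightarrow> D j k = 0)"

definition diag_equiv :: "'a::{ring,monoid_mult} mat3 \<Rightarrow> 'a mat3 \<Rightarrow> bool" where
  "diag_equiv A B \<longleftrightarrow> (\<exists>D1 D2. is_diag D1 \<and> mat_invertible D1 \<and> is_diag D2 \<and> mat_invertible D2 \<and>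
      B = mmult (mmult (minv D1) A) D2)"

end

theory Submission imports Defs begin


lemma uinv_unique:
  fixes x y :: "'a::{ring,monoid_mult}"
  assumes "x * y = 1" "y * x = 1" shows "uinv x = y"
proof -
  have ex: "\<exists>!y. x * y = 1 \<and> y * x = 1"
  proof (rule ex1I[of _ y])
    show "x*y=1 \<and> y*x=1" using assms by simp
    fix z assume z: "x*z=1 \<and> z*x=1"
    have "z = z * (x * y)" using assms by simp
    also have "\<dots> = (z*x)*y" by (simp add: mult.assoc)
    also have "\<dots> = y" using z by simp
    finally show "z = y" .
  qed
  show ?thesis unfolding uinv_def
    by (rule the1_equality[OF ex]) (use assms in simp)
qed

lemma runitI: "x * y = 1 \<Longrightarrow> y * x = 1 \<Longrightarrow> is_runit (x::'a::{ring,monoid_mult})"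
  unfolding is_runit_def by blast

lemma runit_inv:
  fixes x :: "'a::{ring,monoid_mult}"
  assumes "is_runit x" shows "x * uinv x = 1" "uinv x * x = 1"
proof -
  obtain y where "x * y = 1" "y * x = 1" using assms unfolding is_runit_def by blast
  then have "uinv x = y" by (rule uinv_unique)
  then show "x * uinv x = 1" "uinv x * x = 1" using \<open>x * y = 1\<close> \<open>y * x = 1\<close> by simp_all
qed

lemma runit_cancel:
  fixes x :: "'a::{ring,monoid_mult}"
  assumes "is_runit x" shows "x * (uinv x * t) = t" "uinv x * (x * t) = t"
  using runit_inv[OF assms] by (simp_all add: mult.assoc[symmetric])

lemma runit_uinv: "is_runit x \<Longrightarrow> is_runit (uinv (x::'a::{ring,monoid_mult}))"
  using runit_inv runitI by metis

lemma uinv_uinv: "is_runit x \<Longrightarrow> uinv (uinv (x::'a::{ring,monoid_mult})) = x"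
  using runit_inv uinv_unique by metis

lemma runit_mult:
  fixes x y :: "'a::{ring,monoid_mult}"
  assumes "is_runit x" "is_runit y" shows "is_runit (x*y)" "uinv (x*y) = uinv y * uinv x"
proof -
  have 1: "(x*y) * (uinv y * uinv x) = 1"
    using runit_inv[OF assms(1)] runit_cancel[OF assms(2)] by (simp add: mult.assoc)
  have 2: "(uinv y * uinv x) * (x*y) = 1"
    using runit_inv[OF assms(2)] runit_cancel[OF assms(1)] by (simp add: mult.assoc)
  show "is_runit (x*y)" by (rule runitI[OF 1 2])
  show "uinv (x*y) = uinv y * uinv x" by (rule uinv_unique[OF 1 2])
qed

lemma runit_one: "is_runit (1::'a::{ring,monoid_mult})" "uinv (1::'a::{ring,monoid_mult}) = 1"
  using runitI[of 1 1] uinv_unique[of 1 1] by simp_all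

lemma runit_neg:
  fixes x :: "'a::{ring,monoid_mult}"
  assumes "is_runit x" shows "is_runit (-x)" "uinv (-x) = - uinv x"
proof -
  have 1: "(-x) * (- uinv x) = 1" "(- uinv x) * (-x) = 1" using runit_inv[OF assms] by simp_all
  show "is_runit (-x)" by (rule runitI[OF 1])
  show "uinv (-x) = - uinv x" by (rule uinv_unique[OF 1])
qed

lemma runit_cancel2:
  fixes x :: "'a::{ring,monoid_mult}"
  assumes "is_runit x" shows "t * x * uinv x = t" "t * uinv x * x = t"
  using runit_inv[OF assms] by (simp_all add: mult.assoc)


lemma three_cases: "(x::3) = 0 \<or> x = 1 \<or> x = 2"
proof (cases x)
  case (of_int z)
  then have "z = 0 \<or> z = 1 \<or> z = 2" by auto
  then show ?thesis using of_int by auto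
qed

lemma UNIV3: "(UNIV::3 set) = {0,1,2}" using three_cases by auto

lemma sum3: "(\<Sum>l\<in>(UNIV::3 set). f l) = f 0 + f 1 + f 2"
proof -
  have "(\<Sum>l\<in>(UNIV::3 set). f l) = (\<Sum>l\<in>{0,1,2}. f l)" by (simp only: UNIV3)
  also have "\<dots> = f 0 + (f 1 + f 2)" by simp
  finally show ?thesis by (simp add: add.assoc)
qed

lemma rot3: fixes j :: 3 shows "j + 1 \<noteq> j" "j + 2 \<noteq> j" "j + 1 \<noteq> j + 2" "j + 1 + 1 = j + 2" "j + 2 + 1 = j"
  "j + 2 + 2 = j + 1" "j + 1 + 2 = j"
  using three_cases[of j] by (elim disjE; simp)+

lemma sum_rot: "(\<Sum>l\<in>(UNIV::3 set). f l) = f j + f (j+1) + f (j+2)"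
proof -
  have 3: "(3::3) = 0" "(4::3) = 1" by simp_all
  show ?thesis using three_cases[of j] by (elim disjE; simp add: sum3 ac_simps 3)
qed

lemma UNIV_minus3: "(UNIV::3 set) - {k} = {k+1, k+2}"
proof -
  have "k+1 \<noteq> k" "k+2\<noteq>k" by (simp_all add: rot3)
  moreover have "x = k \<or> x = k+1 \<or> x = k+2" for x
    using three_cases[of x] three_cases[of k] by (elim disjE; simp)
  ultimately show ?thesis by auto
qed

lemma other3: fixes i k :: 3 shows "i \<noteq> k \<Longrightarrow> i = k + 1 \<or> i = k + 2"
  using three_cases[of i] three_cases[of k] by (elim disjE; simp)

lemma mmult_entry: "mmult A B j k = A j 0 * B 0 k + A j 1 * B 1 k + A j 2 * B 2 k"
  by (simp add: mmult_def sum3)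

lemma mmult_assoc: "mmult (mmult A B) C = mmult A (mmult B C)"
  by (simp add: fun_eq_iff mmult_entry algebra_simps)

lemma mmult_mone: "mmult A mone = A" "mmult mone A = A"
  by (simp_all add: fun_eq_iff mmult_def mone_def if_distrib if_distribR sum.delta sum.delta' cong: if_cong)

lemma minv_unique:
  assumes "mmult A B = mone" "mmult B A = mone" shows "minv A = B"
proof -
  have ex: "\<exists>!B. mmult A B = mone \<and> mmult B A = mone"
  proof (rule ex1I[of _ B])
    show "mmult A B = mone \<and> mmult B A = mone" using assms by simp
    fix C assume C: "mmult A C = mone \<and> mmult C A = mone"
    have "C = mmult C (mmult A B)" using assms by (simp add: mmult_mone)
    also have "\<dots> = mmult (mmult C A) B" by (simp add: mmult_assoc)
    also have "\<dots> = B" using C by (simp add: mmult_mone)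
    finally show "C = B" .
  qed
  show ?thesis unfolding minv_def by (rule the1_equality[OF ex]) (use assms in simp)
qed

lemma mat_inv_minv:
  assumes "mat_invertible A" shows "mmult A (minv A) = mone" "mmult (minv A) A = mone"
proof -
  obtain B where "mmult A B = mone" "mmult B A = mone" using assms unfolding mat_invertible_def by blast
  then show "mmult A (minv A) = mone" "mmult (minv A) A = mone" using minv_unique by metis+
qed


section \<open>2x2 matrices\<close>

definition inv2w :: "'a::{ring,monoid_mult} \<Rightarrow> 'a \<Rightarrow> 'a \<Rightarrow> 'a \<Rightarrow> 'a \<Rightarrow> 'a \<Rightarrow> 'a \<Rightarrow> 'a \<Rightarrow> bool" where
  "inv2w x y z w n11 n12 n21 n22 \<longleftrightarrow>
    x*n11 + y*n21 = 1 \<and> x*n12 + y*n22 = 0 \<and> z*n11 + w*n21 = 0 \<and> z*n12 + w*n22 = 1 \<and>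
    n11*x + n12*z = 1 \<and> n11*y + n12*w = 0 \<and> n21*x + n22*z = 0 \<and> n21*y + n22*w = 1"

definition inv2 :: "'a::{ring,monoid_mult} \<Rightarrow> 'a \<Rightarrow> 'a \<Rightarrow> 'a \<Rightarrow> bool" where
  "inv2 x y z w \<longleftrightarrow> (\<exists>a b c d. inv2w x y z w a b c d)"

lemma inv2_colswap: "inv2 x y z w \<Longrightarrow> inv2 y x w z"
  unfolding inv2_def inv2w_def
  apply (elim exE)
  subgoal for a b c d by (rule exI[of _ c], rule exI[of _ d], rule exI[of _ a], rule exI[of _ b]) (simp add: add.commute)
  done

lemma inv2_rowswap: "inv2 x y z w \<Longrightarrow> inv2 z w x y"
  unfolding inv2_def inv2w_def
  apply (elim exE)
  subgoal for a b c d by (rule exI[of _ b], rule exI[of _ a], rule exI[of _ d], rule exI[of _ c]) (simp add: add.commute)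
  done

lemma inv2_neg: "inv2 x y z w \<Longrightarrow> inv2 (-x) (-y) (-z) (-w)"
  unfolding inv2_def inv2w_def
  apply (elim exE)
  subgoal for a b c d by (rule exI[of _ "-a"], rule exI[of _ "-b"], rule exI[of _ "-c"], rule exI[of _ "-d"]) simp
  done

lemma inv2_scale:
  assumes "inv2 x y z w" "is_runit t" shows "inv2 (x*t) (y*t) (z*t) (w*t)"
proof -
  obtain a b c d where "inv2w x y z w a b c d" using assms(1) unfolding inv2_def by blast
  then have e: "x*a + y*c = 1" "x*b + y*d = 0" "z*a + w*c = 0" "z*b + w*d = 1"
     "a*x + b*z = 1" "a*y + b*w = 0" "c*x + d*z = 0" "c*y + d*w = 1"
    unfolding inv2w_def by auto
  note u = runit_cancel[OF assms(2)] runit_inv[OF assms(2)]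
  have "inv2w (x*t) (y*t) (z*t) (w*t) (uinv t * a) (uinv t * b) (uinv t * c) (uinv t * d)"
    unfolding inv2w_def
  proof (intro conjI)
    show "x * t * (uinv t * a) + y * t * (uinv t * c) = 1" using e by (simp add: mult.assoc u)
    show "x * t * (uinv t * b) + y * t * (uinv t * d) = 0" using e by (simp add: mult.assoc u)
    show "z * t * (uinv t * a) + w * t * (uinv t * c) = 0" using e by (simp add: mult.assoc u)
    show "z * t * (uinv t * b) + w * t * (uinv t * d) = 1" using e by (simp add: mult.assoc u)
    have "uinv t * a * (x * t) + uinv t * b * (z * t) = uinv t * ((a*x + b*z) * t)" by (simp add: algebra_simps)
    then show "uinv t * a * (x * t) + uinv t * b * (z * t) = 1" using e u by simp
    have "uinv t * a * (y * t) + uinv t * b * (w * t) = uinv t * ((a*y + b*w) * t)" by (simp add: algebra_simps)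
    then show "uinv t * a * (y * t) + uinv t * b * (w * t) = 0" using e u by simp
    have "uinv t * c * (x * t) + uinv t * d * (z * t) = uinv t * ((c*x + d*z) * t)" by (simp add: algebra_simps)
    then show "uinv t * c * (x * t) + uinv t * d * (z * t) = 0" using e u by simp
    have "uinv t * c * (y * t) + uinv t * d * (w * t) = uinv t * ((c*y + d*w) * t)" by (simp add: algebra_simps)
    then show "uinv t * c * (y * t) + uinv t * d * (w * t) = 1" using e u by simp
  qed
  then show ?thesis unfolding inv2_def by blast
qed

lemma inv2_quasi:
  assumes "inv2 x y z w" "is_runit x" shows "is_runit (w - z * uinv x * y)"
proof -
  obtain a b c d where "inv2w x y z w a b c d" using assms(1) unfolding inv2_def by blast
  then have e: "x*a + y*c = 1" "x*b + y*d = 0" "z*a + w*c = 0" "z*b + w*d = 1"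
     "a*x + b*z = 1" "a*y + b*w = 0" "c*x + d*z = 0" "c*y + d*w = 1"
    unfolding inv2w_def by auto
  note u = runit_cancel[OF assms(2)] runit_inv[OF assms(2)]
  have b: "b = - (uinv x * y * d)"
  proof -
    have "x * b = - (y * d)" using e(2) by (simp add: eq_neg_iff_add_eq_0)
    then have "uinv x * (x * b) = uinv x * (- (y*d))" by simp
    then show ?thesis using u by (simp add: mult.assoc)
  qed
  have c: "c = - (d * z * uinv x)"
  proof -
    have "c * x = - (d * z)" using e(7) by (simp add: eq_neg_iff_add_eq_0)
    then have "(c * x) * uinv x = (- (d*z)) * uinv x" by simp
    then show ?thesis using u by (simp add: mult.assoc)
  qed
  have r: "(w - z * uinv x * y) * d = 1"
  proof -
    have "(w - z * uinv x * y) * d = z*b + w*d" by (simp add: b algebra_simps)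
    then show ?thesis using e(4) by simp
  qed
  have l: "d * (w - z * uinv x * y) = 1"
  proof -
    have "d * (w - z * uinv x * y) = c*y + d*w" by (simp add: c algebra_simps)
    then show ?thesis using e(8) by simp
  qed
  show ?thesis by (rule runitI[OF r l])
qed


lemma inv2_criterion:
  assumes ux: "is_runit x" and uq: "is_runit (w - z * uinv x * y)"
  shows "inv2 x y z w"
proof -
  define q where "q = w - z * uinv x * y"
  define ix where "ix = uinv x"
  define iq where "iq = uinv q"
  have wq: "w = q + z * ix * y" unfolding q_def ix_def by simp
  have uq': "is_runit q" using uq unfolding q_def .
  note ux1 = runit_inv[OF ux, folded ix_def] runit_cancel[OF ux, folded ix_def]
  note uq1 = runit_inv[OF uq', folded iq_def] runit_cancel[OF uq', folded iq_def]
  have "inv2w x y z w (ix + ix*y*iq*z*ix) (-(ix*y*iq)) (-(iq*z*ix)) iq"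
    unfolding inv2w_def wq
    by (simp add: algebra_simps ux1 uq1)
  then show ?thesis unfolding inv2_def by blast
qed

lemma inv2_J2:
  assumes "inv2 x y z w" "is_runit x" "is_runit y" "is_runit z" "is_runit w"
  shows "inv2 (uinv x) (uinv z) (uinv y) (uinv w)"
proof (rule inv2_criterion)
  show "is_runit (uinv x)" using assms runit_uinv by blast
  have q: "is_runit (y - x * uinv z * w)" using inv2_quasi[OF inv2_rowswap[OF assms(1)] assms(4)] .
  have "uinv w - uinv y * uinv (uinv x) * uinv z = uinv y * (y - x * uinv z * w) * uinv w"
    using assms by (simp add: uinv_uinv algebra_simps runit_inv runit_cancel runit_cancel2)
  moreover have "is_runit (uinv y * (y - x * uinv z * w) * uinv w)"
    using q assms by (simp add: runit_mult runit_uinv)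
  ultimately show "is_runit (uinv w - uinv y * uinv (uinv x) * uinv z)" by simp
qed

lemma inv2_anti:
  assumes "inv2 x y z w" "is_runit x" "is_runit y" "is_runit z" "is_runit w"
  shows "inv2 (uinv w) (uinv y) (uinv z) (uinv x)"
proof (rule inv2_criterion)
  show "is_runit (uinv w)" using assms runit_uinv by blast
  have q: "is_runit (z - w * uinv y * x)" using inv2_quasi[OF inv2_colswap[OF assms(1)] assms(3)] .
  have "uinv x - uinv z * uinv (uinv w) * uinv y = uinv z * (z - w * uinv y * x) * uinv x"
    using assms by (simp add: uinv_uinv algebra_simps runit_inv runit_cancel runit_cancel2)
  moreover have "is_runit (uinv z * (z - w * uinv y * x) * uinv x)"
    using q assms by (simp add: runit_mult runit_uinv)
  ultimately show "is_runit (uinv x - uinv z * uinv (uinv w) * uinv y)" by simp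
qed

lemma sum2: "k1 \<noteq> k2 \<Longrightarrow> (\<Sum>k\<in>{k1,k2}. f k) = f k1 + f k2" by simp

lemma sub_inv2_D:
  assumes "i1 \<noteq> i2" "k1 \<noteq> k2" "sub_invertible X {i1,i2} {k1,k2}"
  shows "inv2 (X i1 k1) (X i1 k2) (X i2 k1) (X i2 k2)"
proof -
  obtain N where N1: "\<forall>i\<in>{i1,i2}. \<forall>i'\<in>{i1,i2}. (\<Sum>k\<in>{k1,k2}. X i k * N k i') = (if i = i' then 1 else 0)"
    and N2: "\<forall>k\<in>{k1,k2}. \<forall>k'\<in>{k1,k2}. (\<Sum>i\<in>{i1,i2}. N k i * X i k') = (if k = k' then 1 else 0)"
    using assms(3) unfolding sub_invertible_def by blast
  have "inv2w (X i1 k1) (X i1 k2) (X i2 k1) (X i2 k2) (N k1 i1) (N k1 i2) (N k2 i1) (N k2 i2)"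
    unfolding inv2w_def using N1 N2 assms(1,2) by (simp add: sum2)
  then show ?thesis unfolding inv2_def by blast
qed

lemma sub_inv2_I:
  assumes "i1 \<noteq> i2" "k1 \<noteq> k2" "inv2 (X i1 k1) (X i1 k2) (X i2 k1) (X i2 k2)"
  shows "sub_invertible X {i1,i2} {k1,k2}"
proof -
  obtain a b c d where e: "inv2w (X i1 k1) (X i1 k2) (X i2 k1) (X i2 k2) a b c d"
    using assms(3) unfolding inv2_def by blast
  define N where "N = (\<lambda>k i. if k = k1 then (if i = i1 then a else b) else (if i = i1 then c else d))"
  have "(\<forall>i\<in>{i1,i2}. \<forall>i'\<in>{i1,i2}. (\<Sum>k\<in>{k1,k2}. X i k * N k i') = (if i = i' then 1 else 0)) \<and>
        (\<forall>k\<in>{k1,k2}. \<forall>k'\<in>{k1,k2}. (\<Sum>i\<in>{i1,i2}. N k i * X i k') = (if k = k' then 1 else 0))"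
    using e assms(1,2) unfolding inv2w_def N_def by (auto simp: sum2)
  then show ?thesis unfolding sub_invertible_def by blast
qed

lemma sub_inv_rot_D:
  assumes "sub_invertible X (UNIV - {k}) (UNIV - {j})"
  shows "inv2 (X (k+1) (j+1)) (X (k+1) (j+2)) (X (k+2) (j+1)) (X (k+2) (j+2))"
  using assms by (intro sub_inv2_D) (simp_all add: UNIV_minus3 rot3)

lemma sub_inv_rot_I:
  assumes "inv2 (X (k+1) (j+1)) (X (k+1) (j+2)) (X (k+2) (j+1)) (X (k+2) (j+2))"
  shows "sub_invertible X (UNIV - {k}) (UNIV - {j})"
  unfolding UNIV_minus3 using assms by (intro sub_inv2_I) (simp_all add: rot3)

lemma sub_inv_single: "sub_invertible X {i} {k} \<Longrightarrow> is_runit (X i k)"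
  unfolding sub_invertible_def is_runit_def by auto

lemma sub_inv_UNIV: "sub_invertible X UNIV UNIV \<Longrightarrow> mat_invertible X"
  unfolding sub_invertible_def mat_invertible_def mmult_def mone_def by (auto simp: fun_eq_iff)


section \<open>Entries and minors of inverse matrices\<close>

lemma mm_rot:
  assumes "mmult X Y = mone"
  shows "X i j * Y j k + X i (j+1) * Y (j+1) k + X i (j+2) * Y (j+2) k = (if i = k then 1 else 0)"
proof -
  have "mmult X Y i k = mone i k" using assms by simp
  then show ?thesis unfolding mmult_def mone_def by (simp add: sum_rot[of _ j])
qed

lemma solve2_col:
  fixes x :: "'a::{ring,monoid_mult}"
  assumes "inv2w x y z w a b c d" "x*u + y*v = p" "z*u + w*v = q"
  shows "u = a*p + b*q" "v = c*p + d*q"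
proof -
  have e: "a*x + b*z = 1" "a*y + b*w = 0" "c*x + d*z = 0" "c*y + d*w = 1"
    using assms(1) unfolding inv2w_def by auto
  have "a*p + b*q = (a*x + b*z)*u + (a*y + b*w)*v" unfolding assms(2,3)[symmetric] by (simp add: algebra_simps)
  then show "u = a*p + b*q" using e by simp
  have "c*p + d*q = (c*x + d*z)*u + (c*y + d*w)*v" unfolding assms(2,3)[symmetric] by (simp add: algebra_simps)
  then show "v = c*p + d*q" using e by simp
qed

lemma solve2_row:
  fixes x :: "'a::{ring,monoid_mult}"
  assumes "inv2w x y z w a b c d" "u*x + v*z = p" "u*y + v*w = q"
  shows "u = p*a + q*c" "v = p*b + q*d"
proof -
  have e: "x*a + y*c = 1" "x*b + y*d = 0" "z*a + w*c = 0" "z*b + w*d = 1"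
    using assms(1) unfolding inv2w_def by auto
  have "p*a + q*c = u*(x*a + y*c) + v*(z*a + w*c)" unfolding assms(2,3)[symmetric] by (simp add: algebra_simps)
  then show "u = p*a + q*c" using e by simp
  have "p*b + q*d = u*(x*b + y*d) + v*(z*b + w*d)" unfolding assms(2,3)[symmetric] by (simp add: algebra_simps)
  then show "v = p*b + q*d" using e by simp
qed

lemma inv_entry_unit:
  fixes X Y :: "'a::{ring,monoid_mult} mat3"
  assumes XY: "mmult X Y = mone" and YX: "mmult Y X = mone"
    and S: "inv2 (X (k+1) (j+1)) (X (k+1) (j+2)) (X (k+2) (j+1)) (X (k+2) (j+2))"
  shows "is_runit (Y j k)"
proof -
  obtain a b c d where N: "inv2w (X (k+1) (j+1)) (X (k+1) (j+2)) (X (k+2) (j+1)) (X (k+2) (j+2)) a b c d"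
    using S unfolding inv2_def by blast
  define t where "t = Y j k"
  define q where "q = X k j - X k (j+1) * (a * X (k+1) j + b * X (k+2) j) - X k (j+2) * (c * X (k+1) j + d * X (k+2) j)"
  have e1: "X (k+1) j * t + X (k+1) (j+1) * Y (j+1) k + X (k+1) (j+2) * Y (j+2) k = 0"
    using mm_rot[OF XY, of "k+1" j k] unfolding t_def by (simp add: rot3)
  have e2: "X (k+2) j * t + X (k+2) (j+1) * Y (j+1) k + X (k+2) (j+2) * Y (j+2) k = 0"
    using mm_rot[OF XY, of "k+2" j k] unfolding t_def by (simp add: rot3)
  have e3: "X k j * t + X k (j+1) * Y (j+1) k + X k (j+2) * Y (j+2) k = 1"
    using mm_rot[OF XY, of k j k] unfolding t_def by simp
  have s1: "X (k+1) (j+1) * Y (j+1) k + X (k+1) (j+2) * Y (j+2) k = - (X (k+1) j * t)"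
    using e1 by (simp add: eq_neg_iff_add_eq_0 add.assoc add.commute add.left_commute)
  have s2: "X (k+2) (j+1) * Y (j+1) k + X (k+2) (j+2) * Y (j+2) k = - (X (k+2) j * t)"
    using e2 by (simp add: eq_neg_iff_add_eq_0 add.assoc add.commute add.left_commute)
  note sol = solve2_col[OF N s1 s2]
  have l: "q * t = 1"
  proof -
    have "q * t = X k j * t + X k (j+1) * (a * - (X (k+1) j * t) + b * - (X (k+2) j * t))
        + X k (j+2) * (c * - (X (k+1) j * t) + d * - (X (k+2) j * t))"
      unfolding q_def by (simp add: algebra_simps)
    also have "\<dots> = 1" using e3 sol by simp
    finally show ?thesis .
  qed
  have f1: "t * X k (j+1) + Y j (k+1) * X (k+1) (j+1) + Y j (k+2) * X (k+2) (j+1) = 0"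
    using mm_rot[OF YX, of j k "j+1"] unfolding t_def by (simp add: rot3)
  have f2: "t * X k (j+2) + Y j (k+1) * X (k+1) (j+2) + Y j (k+2) * X (k+2) (j+2) = 0"
    using mm_rot[OF YX, of j k "j+2"] unfolding t_def by (simp add: rot3)
  have f3: "t * X k j + Y j (k+1) * X (k+1) j + Y j (k+2) * X (k+2) j = 1"
    using mm_rot[OF YX, of j k j] unfolding t_def by simp
  have r1: "Y j (k+1) * X (k+1) (j+1) + Y j (k+2) * X (k+2) (j+1) = - (t * X k (j+1))"
    using f1 by (simp add: eq_neg_iff_add_eq_0 add.assoc add.commute add.left_commute)
  have r2: "Y j (k+1) * X (k+1) (j+2) + Y j (k+2) * X (k+2) (j+2) = - (t * X k (j+2))"
    using f2 by (simp add: eq_neg_iff_add_eq_0 add.assoc add.commute add.left_commute)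
  note solr = solve2_row[OF N r1 r2]
  have r: "t * q = 1"
  proof -
    have "t * q = t * X k j + (- (t * X k (j+1)) * a + - (t * X k (j+2)) * c) * X (k+1) j
       + (- (t * X k (j+1)) * b + - (t * X k (j+2)) * d) * X (k+2) j"
      unfolding q_def by (simp add: algebra_simps)
    also have "\<dots> = 1" using f3 solr by simp
    finally show ?thesis .
  qed
  show ?thesis unfolding t_def[symmetric] by (rule runitI[OF r l])
qed

lemma jac1:
  fixes p0 :: "'a::{ring,monoid_mult}"
  assumes "p0*q0 + p1*q1 + p2*q2 = e" "p0*s0 + p1*s1 + p2*s2 = 0" "s0 * ix = 1"
  shows "p1*(q1 - s1*ix*q0) + p2*(q2 - s2*ix*q0) = e"
proof -
  have "p1*(q1 - s1*ix*q0) + p2*(q2 - s2*ix*q0) = (p0*q0 + p1*q1 + p2*q2) - (p0*s0 + p1*s1 + p2*s2)*ix*q0 + p0*(s0*ix)*q0 - p0*q0"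
    by (simp add: algebra_simps)
  then show ?thesis using assms by simp
qed

lemma jac2:
  fixes a0 :: "'a::{ring,monoid_mult}"
  assumes "a0*b0 + a1*b1 + a2*b2 = e" "s*b0 + s1*b1 + s2*b2 = 0" "ix * s = 1"
  shows "(a1 - a0*ix*s1)*b1 + (a2 - a0*ix*s2)*b2 = e"
proof -
  have "(a1 - a0*ix*s1)*b1 + (a2 - a0*ix*s2)*b2 = (a0*b0 + a1*b1 + a2*b2) - a0*ix*(s*b0 + s1*b1 + s2*b2) + a0*(ix*s)*b0 - a0*b0"
    by (simp add: algebra_simps)
  then show ?thesis using assms by simp
qed

lemma inv_sub_inv:
  fixes X Y :: "'a::{ring,monoid_mult} mat3"
  assumes XY: "mmult X Y = mone" and YX: "mmult Y X = mone" and u: "is_runit (X j k)"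
  shows "inv2 (Y (k+1) (j+1)) (Y (k+1) (j+2)) (Y (k+2) (j+1)) (Y (k+2) (j+2))"
proof -
  define ix where "ix = uinv (X j k)"
  define Z where "Z = (\<lambda>c r. X c r - X c k * ix * X j r)"
  have ix1: "X j k * ix = 1" "ix * X j k = 1" using runit_inv[OF u] unfolding ix_def by auto
  have A: "Y r (j+1) * Z (j+1) r' + Y r (j+2) * Z (j+2) r' = (if r = r' then 1 else 0)"
    if "r \<noteq> k" for r r'
    unfolding Z_def
    by (rule jac1[OF mm_rot[OF YX, of r j r'] _ ix1(1)]) (use mm_rot[OF YX, of r j k] that in simp)
  have B: "Z c (k+1) * Y (k+1) c' + Z c (k+2) * Y (k+2) c' = (if c = c' then 1 else 0)"
    if "c' \<noteq> j" for c c'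
    unfolding Z_def
    by (rule jac2[OF mm_rot[OF XY, of c k c'] _ ix1(2)]) (use mm_rot[OF XY, of j k c'] that in simp)
  have "inv2w (Y (k+1) (j+1)) (Y (k+1) (j+2)) (Y (k+2) (j+1)) (Y (k+2) (j+2))
     (Z (j+1) (k+1)) (Z (j+1) (k+2)) (Z (j+2) (k+1)) (Z (j+2) (k+2))"
    unfolding inv2w_def
    using A[of "k+1" "k+1"] A[of "k+1" "k+2"] A[of "k+2" "k+1"] A[of "k+2" "k+2"]
      B[of "j+1" "j+1"] B[of "j+1" "j+2"] B[of "j+2" "j+1"] B[of "j+2" "j+2"]
    by (simp add: rot3)
  then show ?thesis unfolding inv2_def by blast
qed


section \<open>Hat matrices\<close>

lemma mm_entry:
  assumes "mmult X Y = mone"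
  shows "X i 0 * Y 0 k + X i 1 * Y 1 k + X i 2 * Y 2 k = (if i = k then 1 else 0)"
  using mm_rot[OF assms, of i 0 k] by simp

lemma hat_conv:
  fixes X :: "'a::{ring,monoid_mult} mat3"
  assumes h: "hat X" and XZ: "mmult X Z = mone" and ZX: "mmult Z X = mone"
  shows "inv2w (X 1 1 - 1) (X 1 2 - 1) (X 2 1 - 1) (X 2 2 - 1) (Z 1 1) (Z 1 2) (Z 2 1) (Z 2 2)"
proof -
  have h0: "X 0 k = 1" "X j 0 = 1" for j k using h unfolding hat_def by auto
  have r: "(X j 1 - 1) * Z 1 k + (X j 2 - 1) * Z 2 k = (if j = k then 1 else 0)" if "k \<noteq> 0" for j k
  proof -
    have a: "Z 0 k + X j 1 * Z 1 k + X j 2 * Z 2 k = (if j = k then 1 else 0)" using mm_entry[OF XZ, of j k] h0 by simp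
    have b: "Z 0 k + Z 1 k + Z 2 k = 0" using mm_entry[OF XZ, of 0 k] h0 that by simp
    have "(X j 1 - 1) * Z 1 k + (X j 2 - 1) * Z 2 k = (Z 0 k + X j 1 * Z 1 k + X j 2 * Z 2 k) - (Z 0 k + Z 1 k + Z 2 k)"
      by (simp add: algebra_simps)
    then show ?thesis using a b by simp
  qed
  have l: "Z j 1 * (X 1 k - 1) + Z j 2 * (X 2 k - 1) = (if j = k then 1 else 0)" if "j \<noteq> 0" for j k
  proof -
    have a: "Z j 0 + Z j 1 * X 1 k + Z j 2 * X 2 k = (if j = k then 1 else 0)" using mm_entry[OF ZX, of j k] h0 by simp
    have b: "Z j 0 + Z j 1 + Z j 2 = 0" using mm_entry[OF ZX, of j 0] h0 that by simp
    have "Z j 1 * (X 1 k - 1) + Z j 2 * (X 2 k - 1) = (Z j 0 + Z j 1 * X 1 k + Z j 2 * X 2 k) - (Z j 0 + Z j 1 + Z j 2)"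
      by (simp add: algebra_simps)
    then show ?thesis using a b by simp
  qed
  show ?thesis unfolding inv2w_def
    using r[of 1 1] r[of 1 2] r[of 2 1] r[of 2 2] l[of 1 1] l[of 1 2] l[of 2 1] l[of 2 2] by simp
qed

lemma hat_fwd:
  fixes X :: "'a::{ring,monoid_mult} mat3"
  assumes h: "hat X" and I: "inv2 (X 1 1 - 1) (X 1 2 - 1) (X 2 1 - 1) (X 2 2 - 1)"
  shows "mat_invertible X"
proof -
  obtain a b c d where N: "inv2w (X 1 1 - 1) (X 1 2 - 1) (X 2 1 - 1) (X 2 2 - 1) a b c d"
    using I unfolding inv2_def by blast
  define m11 where "m11 = X 1 1 - 1"
  define m12 where "m12 = X 1 2 - 1"
  define m21 where "m21 = X 2 1 - 1"
  define m22 where "m22 = X 2 2 - 1"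
  have e: "m11*a + m12*c = 1" "m11*b + m12*d = 0" "m21*a + m22*c = 0" "m21*b + m22*d = 1"
     "a*m11 + b*m21 = 1" "a*m12 + b*m22 = 0" "c*m11 + d*m21 = 0" "c*m12 + d*m22 = 1"
    using N unfolding inv2w_def m11_def m12_def m21_def m22_def by auto
  have xe: "X 0 0 = 1" "X 0 1 = 1" "X 0 2 = 1" "X 1 0 = 1" "X 2 0 = 1"
    "X 1 1 = m11 + 1" "X 1 2 = m12 + 1" "X 2 1 = m21 + 1" "X 2 2 = m22 + 1"
    using h unfolding hat_def m11_def m12_def m21_def m22_def by auto
  define Z :: "'a mat3" where "Z = (\<lambda>j k. if j = 0 then (if k = 0 then 1 + (a+b+c+d) else if k = 1 then -(a+c) else -(b+d))
       else if j = 1 then (if k = 0 then -(a+b) else if k = 1 then a else b)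
       else (if k = 0 then -(c+d) else if k = 1 then c else d))"
  have ze: "Z 0 0 = 1 + (a+b+c+d)" "Z 0 1 = -(a+c)" "Z 0 2 = -(b+d)" "Z 1 0 = -(a+b)" "Z 1 1 = a" "Z 1 2 = b"
    "Z 2 0 = -(c+d)" "Z 2 1 = c" "Z 2 2 = d" unfolding Z_def by simp_all
  have "mmult X Z = mone"
  proof -
    have "mmult X Z j k = mone j k" for j k
      using three_cases[of j] three_cases[of k]
      apply (elim disjE)
      apply (simp_all add: mmult_entry mone_def xe ze)
      using e by (simp_all add: algebra_simps)
    then show ?thesis by (simp add: fun_eq_iff)
  qed
  moreover have "mmult Z X = mone"
  proof -
    have "mmult Z X j k = mone j k" for j k
      using three_cases[of j] three_cases[of k]
      apply (elim disjE)
      apply (simp_all add: mmult_entry mone_def xe ze)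
      using e by (simp_all add: algebra_simps)
    then show ?thesis by (simp add: fun_eq_iff)
  qed
  ultimately show ?thesis unfolding mat_invertible_def by blast
qed


lemma inv2_diag:
  fixes x :: "'a::{ring,monoid_mult}"
  assumes I: "inv2 x y z w" and u: "is_runit l1" "is_runit l2" "is_runit r1" "is_runit r2"
  shows "inv2 (l1*x*r1) (l1*y*r2) (l2*z*r1) (l2*w*r2)"
proof -
  obtain a b c d where "inv2w x y z w a b c d" using I unfolding inv2_def by blast
  then have e: "x*a + y*c = 1" "x*b + y*d = 0" "z*a + w*c = 0" "z*b + w*d = 1"
     "a*x + b*z = 1" "a*y + b*w = 0" "c*x + d*z = 0" "c*y + d*w = 1"
    unfolding inv2w_def by auto
  note cc = runit_cancel[OF u(1)] runit_cancel[OF u(2)] runit_cancel[OF u(3)] runit_cancel[OF u(4)]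
     runit_inv[OF u(1)] runit_inv[OF u(2)] runit_inv[OF u(3)] runit_inv[OF u(4)]
  define n11 where "n11 = uinv r1 * a * uinv l1"
  define n12 where "n12 = uinv r1 * b * uinv l2"
  define n21 where "n21 = uinv r2 * c * uinv l1"
  define n22 where "n22 = uinv r2 * d * uinv l2"
  have "l1*x*r1*n11 + l1*y*r2*n21 = l1*((x*a + y*c)*uinv l1)" unfolding n11_def n21_def by (simp add: algebra_simps cc)
  moreover have "l1*x*r1*n12 + l1*y*r2*n22 = l1*((x*b + y*d)*uinv l2)" unfolding n12_def n22_def by (simp add: algebra_simps cc)
  moreover have "l2*z*r1*n11 + l2*w*r2*n21 = l2*((z*a + w*c)*uinv l1)" unfolding n11_def n21_def by (simp add: algebra_simps cc)
  moreover have "l2*z*r1*n12 + l2*w*r2*n22 = l2*((z*b + w*d)*uinv l2)" unfolding n12_def n22_def by (simp add: algebra_simps cc)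
  moreover have "n11*(l1*x*r1) + n12*(l2*z*r1) = uinv r1*((a*x + b*z)*r1)" unfolding n11_def n12_def by (simp add: algebra_simps cc)
  moreover have "n11*(l1*y*r2) + n12*(l2*w*r2) = uinv r1*((a*y + b*w)*r2)" unfolding n11_def n12_def by (simp add: algebra_simps cc)
  moreover have "n21*(l1*x*r1) + n22*(l2*z*r1) = uinv r2*((c*x + d*z)*r1)" unfolding n21_def n22_def by (simp add: algebra_simps cc)
  moreover have "n21*(l1*y*r2) + n22*(l2*w*r2) = uinv r2*((c*y + d*w)*r2)" unfolding n21_def n22_def by (simp add: algebra_simps cc)
  ultimately have "inv2w (l1*x*r1) (l1*y*r2) (l2*z*r1) (l2*w*r2) n11 n12 n21 n22"
    unfolding inv2w_def using e cc by simp
  then show ?thesis unfolding inv2_def by blast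
qed

lemma mm_perm:
  assumes "mmult X Y = mone" "j \<noteq> 0" "jb \<noteq> 0" "j \<noteq> jb"
  shows "X i 0 * Y 0 k + X i j * Y j k + X i jb * Y jb k = (if i = k then 1 else 0)"
proof -
  have "j = 1 \<and> jb = 2 \<or> j = 2 \<and> jb = 1" using assms(2-4) three_cases[of j] three_cases[of jb] by auto
  then show ?thesis using mm_entry[OF assms(1), of i k] by (auto simp: ac_simps)
qed

lemma jac_hat:
  fixes A B :: "'a::{ring,monoid_mult} mat3"
  assumes h: "hat A" and BA: "mmult B A = mone"
    and j: "j \<noteq> 0" "jb \<noteq> 0" "j \<noteq> jb" and k: "k \<noteq> 0" "kb \<noteq> 0" "k \<noteq> kb"
    and ub: "is_runit (B k j)" and ua: "is_runit (A jb kb)" and ua1: "is_runit (A jb kb - 1)"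
  shows "is_runit (1 - uinv (A jb kb))" "B 0 j * uinv (B k j) * B k 0 = B 0 0 - uinv (1 - uinv (A jb kb))"
proof -
  have h0: "A 0 c = 1" "A c 0 = 1" for c using h unfolding hat_def by auto
  define ia where "ia = uinv (A jb kb)"
  have ia1: "A jb kb * ia = 1" "ia * A jb kb = 1" using runit_inv[OF ua] unfolding ia_def by auto
  have e1: "B 0 0 + B 0 j + B 0 jb = 1" using mm_perm[OF BA j, of 0 0] h0 by simp
  have e2: "B 0 0 + B 0 j * A j kb + B 0 jb * A jb kb = 0" using mm_perm[OF BA j, of 0 kb] h0 k by simp
  have e3: "B k 0 + B k j + B k jb = 0" using mm_perm[OF BA j, of k 0] h0 k by simp
  have e4: "B k 0 + B k j * A j kb + B k jb * A jb kb = 0" using mm_perm[OF BA j, of k kb] h0 k by simp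
  define Z0 where "Z0 = 1 - ia"
  define Zj where "Zj = 1 - A j kb * ia"
  have v: "B 0 0 * Z0 + B 0 j * Zj = 1"
  proof -
    have "B 0 0 * Z0 + B 0 j * Zj = (B 0 0 + B 0 j + B 0 jb) - (B 0 0 + B 0 j * A j kb + B 0 jb * A jb kb) * ia
       + B 0 jb * (A jb kb * ia) - B 0 jb" unfolding Z0_def Zj_def by (simp add: algebra_simps)
    then show ?thesis using e1 e2 ia1 by simp
  qed
  have vi: "B k 0 * Z0 + B k j * Zj = 0"
  proof -
    have "B k 0 * Z0 + B k j * Zj = (B k 0 + B k j + B k jb) - (B k 0 + B k j * A j kb + B k jb * A jb kb) * ia
       + B k jb * (A jb kb * ia) - B k jb" unfolding Z0_def Zj_def by (simp add: algebra_simps)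
    then show ?thesis using e3 e4 ia1 by simp
  qed
  have zj: "Zj = - (uinv (B k j) * B k 0 * Z0)"
  proof -
    have "B k j * Zj = - (B k 0 * Z0)" using vi by (simp add: eq_neg_iff_add_eq_0 add.commute)
    then have "uinv (B k j) * (B k j * Zj) = uinv (B k j) * (- (B k 0 * Z0))" by simp
    then show ?thesis using runit_cancel[OF ub] by (simp add: mult.assoc)
  qed
  have q: "(B 0 0 - B 0 j * uinv (B k j) * B k 0) * Z0 = 1"
    using v unfolding zj by (simp add: algebra_simps)
  have z0: "Z0 = ia * (A jb kb - 1)" unfolding Z0_def using ia1 by (simp add: algebra_simps)
  have uz: "is_runit Z0" unfolding z0 ia_def by (rule runit_mult(1)[OF runit_uinv[OF ua] ua1])
  show "is_runit (1 - uinv (A jb kb))" using uz unfolding Z0_def ia_def .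
  have "B 0 0 - B 0 j * uinv (B k j) * B k 0 = (B 0 0 - B 0 j * uinv (B k j) * B k 0) * Z0 * uinv Z0"
    using runit_cancel2[OF uz] by simp
  also have "\<dots> = uinv Z0" using q by simp
  finally show "B 0 j * uinv (B k j) * B k 0 = B 0 0 - uinv (1 - uinv (A jb kb))"
    unfolding Z0_def ia_def by (simp add: algebra_simps)
qed


section \<open>The Kontsevich-type off-diagonal identities\<close>

lemma num3: "(0::3) + 1 = 1" "(0::3) + 2 = 2" "(1::3) + 1 = 2" "(1::3) + 2 = 0" "(2::3) + 1 = 0" "(2::3) + 2 = 1"
  by simp_all

lemma tele: "(\<Sum>l\<in>(UNIV::3 set). g (l+1) - g (l+2)) = (0::'a::ab_group_add)"
  by (simp only: sum3 num3) simp

lemma tele': "(\<Sum>l\<in>(UNIV::3 set). - (g (l+1) - g (l+2))) = (0::'a::ab_group_add)"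
  by (simp only: sum3 num3) simp

lemma tele2: "(\<Sum>l\<in>(UNIV::3 set). g (l+2) - g (l+1)) = (0::'a::ab_group_add)"
  by (simp only: sum3 num3) simp

lemma sandwich:
  fixes b :: "'a::{ring,monoid_mult}"
  assumes "is_runit b" "is_runit c" shows "uinv b * (b * X * c) * uinv c = X" "uinv b * (- (b * X * c)) * uinv c = - X"
  using assms by (simp_all add: mult.assoc runit_cancel runit_inv)

context
  fixes A B C :: "'a::{ring,monoid_mult} mat3"
  assumes hA: "hat A" and BA: "mmult B A = mone" and HC: "mmult (\<lambda>j k. uinv (A k j)) C = mone"
    and uA: "\<And>i k. is_runit (A i k)" and uB: "\<And>i k. is_runit (B i k)" and uC: "\<And>i k. is_runit (C i k)"
begin

definition "dd l = B l 1 * (A 1 (l+1) - A 1 (l+2)) * C 0 l"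

lemma A0: "A 0 c = 1" "A c 0 = 1" using hA unfolding hat_def by auto

lemma TB: assumes "m \<noteq> l" shows "B l 0 + B l 1 * A 1 m + B l 2 * A 2 m = 0"
  using mm_entry[OF BA, of l m] assms A0 by simp

lemma TC: assumes "j \<noteq> l" shows "C 0 l + uinv (A 1 j) * C 1 l + uinv (A 2 j) * C 2 l = 0"
  using mm_entry[OF HC, of j l] assms A0 by (simp add: runit_one)

lemma R2: "B l 1 * (A 1 (l+1) - A 1 (l+2)) = - (B l 2 * (A 2 (l+1) - A 2 (l+2)))"
proof -
  have "B l 1 * (A 1 (l+1) - A 1 (l+2)) = (B l 0 + B l 1 * A 1 (l+1) + B l 2 * A 2 (l+1))
     - (B l 0 + B l 1 * A 1 (l+2) + B l 2 * A 2 (l+2)) - B l 2 * (A 2 (l+1) - A 2 (l+2))"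
    by (simp add: algebra_simps)
  then show ?thesis using TB[of "l+1" l] TB[of "l+2" l] by (simp add: rot3)
qed

lemma R4': "B l 1 * (A 1 (l+1) * uinv (A 2 (l+1)) - A 1 (l+2) * uinv (A 2 (l+2)))
    = - (B l 0 * (uinv (A 2 (l+1)) - uinv (A 2 (l+2))))"
proof -
  have "B l 1 * (A 1 (l+1) * uinv (A 2 (l+1)) - A 1 (l+2) * uinv (A 2 (l+2)))
     = (B l 0 + B l 1 * A 1 (l+1) + B l 2 * A 2 (l+1)) * uinv (A 2 (l+1))
     - (B l 0 + B l 1 * A 1 (l+2) + B l 2 * A 2 (l+2)) * uinv (A 2 (l+2))
     - B l 0 * (uinv (A 2 (l+1)) - uinv (A 2 (l+2)))"
    by (simp add: algebra_simps runit_cancel runit_inv uA)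
  then show ?thesis using TB[of "l+1" l] TB[of "l+2" l] by (simp add: rot3)
qed

lemma R6': "B l 2 * (A 2 (l+1) * uinv (A 1 (l+1)) - A 2 (l+2) * uinv (A 1 (l+2)))
    = - (B l 0 * (uinv (A 1 (l+1)) - uinv (A 1 (l+2))))"
proof -
  have "B l 2 * (A 2 (l+1) * uinv (A 1 (l+1)) - A 2 (l+2) * uinv (A 1 (l+2)))
     = (B l 0 + B l 1 * A 1 (l+1) + B l 2 * A 2 (l+1)) * uinv (A 1 (l+1))
     - (B l 0 + B l 1 * A 1 (l+2) + B l 2 * A 2 (l+2)) * uinv (A 1 (l+2))
     - B l 0 * (uinv (A 1 (l+1)) - uinv (A 1 (l+2)))"
    by (simp add: algebra_simps runit_cancel runit_inv uA)
  then show ?thesis using TB[of "l+1" l] TB[of "l+2" l] by (simp add: rot3)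
qed

lemma R3: "(A 1 (l+1) - A 1 (l+2)) * C 0 l
   = - ((A 1 (l+1) * uinv (A 2 (l+1)) - A 1 (l+2) * uinv (A 2 (l+2))) * C 2 l)"
proof -
  have "(A 1 (l+1) - A 1 (l+2)) * C 0 l
     = A 1 (l+1) * (C 0 l + uinv (A 1 (l+1)) * C 1 l + uinv (A 2 (l+1)) * C 2 l)
     - A 1 (l+2) * (C 0 l + uinv (A 1 (l+2)) * C 1 l + uinv (A 2 (l+2)) * C 2 l)
     - (A 1 (l+1) * uinv (A 2 (l+1)) - A 1 (l+2) * uinv (A 2 (l+2))) * C 2 l"
    by (simp add: algebra_simps runit_cancel runit_inv uA)
  then show ?thesis using TC[of "l+1" l] TC[of "l+2" l] by (simp add: rot3)
qed

lemma R5': "(A 2 (l+1) - A 2 (l+2)) * C 0 l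
   = - ((A 2 (l+1) * uinv (A 1 (l+1)) - A 2 (l+2) * uinv (A 1 (l+2))) * C 1 l)"
proof -
  have "(A 2 (l+1) - A 2 (l+2)) * C 0 l
     = A 2 (l+1) * (C 0 l + uinv (A 1 (l+1)) * C 1 l + uinv (A 2 (l+1)) * C 2 l)
     - A 2 (l+2) * (C 0 l + uinv (A 1 (l+2)) * C 1 l + uinv (A 2 (l+2)) * C 2 l)
     - (A 2 (l+1) * uinv (A 1 (l+1)) - A 2 (l+2) * uinv (A 1 (l+2))) * C 1 l"
    by (simp add: algebra_simps runit_cancel runit_inv uA)
  then show ?thesis using TC[of "l+1" l] TC[of "l+2" l] by (simp add: rot3)
qed

lemma D2: "dd l = - (B l 2 * (A 2 (l+1) - A 2 (l+2)) * C 0 l)"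
  unfolding dd_def using R2[of l] by (simp add: mult.assoc[symmetric])

lemma D3: "dd l = - (B l 1 * (A 1 (l+1) * uinv (A 2 (l+1)) - A 1 (l+2) * uinv (A 2 (l+2))) * C 2 l)"
  unfolding dd_def using R3[of l] by (simp add: mult.assoc)

lemma D4: "dd l = B l 0 * (uinv (A 2 (l+1)) - uinv (A 2 (l+2))) * C 2 l"
  unfolding D3 using R4'[of l] by (simp add: mult.assoc[symmetric])

lemma D5: "dd l = B l 2 * (A 2 (l+1) * uinv (A 1 (l+1)) - A 2 (l+2) * uinv (A 1 (l+2))) * C 1 l"
  unfolding D2 using R5'[of l] by (simp add: mult.assoc)

lemma D6: "dd l = - (B l 0 * (uinv (A 1 (l+1)) - uinv (A 1 (l+2))) * C 1 l)"
  unfolding D5 using R6'[of l] by (simp add: mult.assoc[symmetric])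

lemma offdiag: assumes "j \<noteq> k" shows "(\<Sum>l\<in>UNIV. uinv (B l j) * dd l * uinv (C k l)) = 0"
proof -
  have "j = 0 \<and> k = 1 \<or> j = 0 \<and> k = 2 \<or> j = 1 \<and> k = 0 \<or> j = 1 \<and> k = 2 \<or> j = 2 \<and> k = 0 \<or> j = 2 \<and> k = 1"
    using assms three_cases[of j] three_cases[of k] by auto
  then show ?thesis
  proof (elim disjE conjE)
    assume "j = 0" "k = 1" then show ?thesis
      unfolding D6 using tele2[of "\<lambda>m. uinv (A 1 m)"] tele'[of "\<lambda>m. uinv (A 1 m)"] by (simp add: sandwich uB uC)
  next
    assume "j = 0" "k = 2" then show ?thesis
      unfolding D4 using tele[of "\<lambda>m. uinv (A 2 m)"] by (simp add: sandwich uB uC)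
  next
    assume "j = 1" "k = 0" then show ?thesis
      unfolding dd_def using tele[of "\<lambda>m. A 1 m"] by (simp add: sandwich uB uC)
  next
    assume "j = 1" "k = 2" then show ?thesis
      unfolding D3 using tele2[of "\<lambda>m. A 1 m * uinv (A 2 m)"] tele'[of "\<lambda>m. A 1 m * uinv (A 2 m)"] by (simp add: sandwich uB uC)
  next
    assume "j = 2" "k = 0" then show ?thesis
      unfolding D2 using tele2[of "\<lambda>m. A 2 m"] tele'[of "\<lambda>m. A 2 m"] by (simp add: sandwich uB uC)
  next
    assume "j = 2" "k = 1" then show ?thesis
      unfolding D5 using tele[of "\<lambda>m. A 2 m * uinv (A 1 m)"] by (simp add: sandwich uB uC)
  qed
qed

lemma offdiag_ex: assumes "j \<noteq> k"
  shows "(\<Sum>l\<in>UNIV. uinv (B l j) * (B l 1 * (A 1 (l+1) - A 1 (l+2)) * C 0 l) * uinv (C k l)) = 0"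
  using offdiag[OF assms] unfolding dd_def .

end


lemma uinv4:
  fixes a :: "'a::{ring,monoid_mult}"
  assumes "is_runit a" "is_runit b" "is_runit c" "is_runit d"
  shows "uinv (a * uinv b * c * uinv d) = d * uinv c * b * uinv a"
  by (rule uinv_unique) (simp_all add: assms mult.assoc runit_cancel runit_inv)

lemma diag_conj:
  fixes x :: "'a::{ring,monoid_mult}"
  assumes ux: "is_runit x"
  shows "diag_equiv (conj_mat x M) M"
proof -
  define D :: "'a mat3" where "D = (\<lambda>j k. if j = k then uinv x else 0)"
  define Di :: "'a mat3" where "Di = (\<lambda>j k. if j = k then x else 0)"
  have e1: "mmult D Di j k = mone j k" for j k
    using three_cases[of j] three_cases[of k] runit_inv[OF ux]
    by (elim disjE) (simp_all add: mmult_entry mone_def D_def Di_def)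
  have e2: "mmult Di D j k = mone j k" for j k
    using three_cases[of j] three_cases[of k] runit_inv[OF ux]
    by (elim disjE) (simp_all add: mmult_entry mone_def D_def Di_def)
  have e: "mmult D Di = mone" "mmult Di D = mone" using e1 e2 by (simp_all add: fun_eq_iff)
  have mi: "minv D = Di" by (rule minv_unique[OF e])
  have dg: "is_diag D" unfolding is_diag_def D_def by simp
  have inv: "mat_invertible D" unfolding mat_invertible_def using e by blast
  have c: "M j k = mmult (mmult Di (conj_mat x M)) D j k" for j k
    using three_cases[of j] three_cases[of k]
    by (elim disjE) (simp_all add: mmult_entry conj_mat_def D_def Di_def mult.assoc runit_cancel ux runit_inv)
  have "M = mmult (mmult Di (conj_mat x M)) D" using c by (simp add: fun_eq_iff)
  then show ?thesis unfolding diag_equiv_def using mi dg inv by metis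
qed


theorem theorem3:
  fixes A :: "'a::{ring,monoid_mult} mat3"
  assumes "in_S A" and "hat A"
  shows "\<exists>x B C. is_runit x \<and> Phi2 A = Some B \<and> Phi_inv A = Some C \<and>
           B = conj_mat x C \<and> diag_equiv B C"
proof -
  have hA: "hat A" by fact
  have A0: "A 0 c = 1" "A c 0 = 1" for c using hA unfolding hat_def by auto
  have subA: "sub_invertible A I K" if "I \<noteq> {}" "card I = card K" for I K
    using assms(1) that unfolding in_S_def by blast
  have uA: "is_runit (A i k)" for i k using subA[of "{i}" "{k}"] sub_inv_single by simp
  have invA: "mat_invertible A" using subA[of UNIV UNIV] sub_inv_UNIV by simp
  have c2: "card ((UNIV::3 set) - {k}) = 2" for k by (simp add: UNIV_minus3 rot3)
  have sub2A: "inv2 (A (k+1) (j+1)) (A (k+1) (j+2)) (A (k+2) (j+1)) (A (k+2) (j+2))" for j k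
    by (rule sub_inv_rot_D, rule subA) (simp_all add: c2 UNIV_minus3)
  have u1A: "is_runit (A u v - 1)" if "u \<noteq> 0" "v \<noteq> 0" for u v
  proof -
    have "sub_invertible A {0,u} {0,v}" by (rule subA) (use that in simp_all)
    then have "inv2 (A 0 0) (A 0 v) (A u 0) (A u v)" using sub_inv2_D that by metis
    then have "inv2 1 1 1 (A u v)" using A0 by simp
    from inv2_quasi[OF this runit_one(1)] show ?thesis by (simp add: runit_one)
  qed
  have uA12: "is_runit (A 1 1 - A 1 2)"
  proof -
    have "sub_invertible A {0,1} {1,2}" by (rule subA) simp_all
    then have "inv2 (A 0 1) (A 0 2) (A 1 1) (A 1 2)" using sub_inv2_D by (metis one_neq_zero zero_neq_numeral num3(3) rot3(1))
    then have "inv2 1 1 (A 1 1) (A 1 2)" using A0 by simp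
    from inv2_quasi[OF this runit_one(1)] have "is_runit (A 1 2 - A 1 1)" by (simp add: runit_one)
    from runit_neg(1)[OF this] show ?thesis by simp
  qed
  define B where "B = minv A"
  have AB: "mmult A B = mone" and BA: "mmult B A = mone" using mat_inv_minv[OF invA] unfolding B_def by auto
  have uB: "is_runit (B j k)" for j k by (rule inv_entry_unit[OF AB BA sub2A])
  define H :: "'a mat3" where "H = (\<lambda>j k. uinv (A k j))"
  have auA: "all_units A" unfolding all_units_def using uA by blast
  have J2A: "J2 A = Some H" unfolding J2_def H_def using auA by simp
  have invH: "mat_invertible H" using assms(1) J2A unfolding in_S_def by simp
  define C where "C = minv H"
  have HC: "mmult H C = mone" and CH: "mmult C H = mone" using mat_inv_minv[OF invH] unfolding C_def by auto
  have uC: "is_runit (C j k)" for j k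
  proof (rule inv_entry_unit[OF HC CH])
    show "inv2 (H (k + 1) (j + 1)) (H (k + 1) (j + 2)) (H (k + 2) (j + 1)) (H (k + 2) (j + 2))"
      unfolding H_def using inv2_J2[OF sub2A[of j k] uA uA uA uA] .
  qed
  have auB: "all_units B" unfolding all_units_def using uB by blast
  have auC: "all_units C" unfolding all_units_def using uC by blast
  define GB :: "'a mat3" where "GB = (\<lambda>j k. uinv (B k j))"
  have JA: "J A = Some GB" unfolding J_def pcomp_def J1_def J2_def GB_def B_def[symmetric] using invA auB by simp
  define LB where "LB = LambdaL B"
  have LBe: "LB j k = B 0 0 * uinv (B j 0) * B j k * uinv (B 0 k)" for j k unfolding LB_def LambdaL_def by simp
  have uLB: "is_runit (LB j k)" for j k unfolding LBe by (simp add: runit_mult runit_uinv uB)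
  define P :: "'a mat3" where "P = (\<lambda>j k. uinv (LB k j))"
  have PhiA: "Phi A = Some P"
  proof -
    have "all_units LB" unfolding all_units_def using uLB by blast
    then show ?thesis unfolding Phi_def P_def using JA hA auA
      by (simp add: J2_def LB_def B_def)
  qed
  have Pe: "P j k = B 0 j * uinv (B k j) * B k 0 * uinv (B 0 0)" for j k
    unfolding P_def LBe by (simp add: uinv4 uB)
  have uP: "is_runit (P j k)" for j k unfolding P_def by (simp add: runit_uinv uLB)
  have hP: "hat P" unfolding hat_def Pe by (simp add: mult.assoc runit_cancel runit_inv uB)
  have auP: "all_units P" unfolding all_units_def using uP by blast
  define z where "z = (\<lambda>u v. 1 - uinv (A u v))"
  have Pblk: "P j k - 1 = uinv (z jb kb) * (- uinv (B 0 0))" "is_runit (z jb kb)"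
    if "j \<noteq> 0" "jb \<noteq> 0" "j \<noteq> jb" "k \<noteq> 0" "kb \<noteq> 0" "k \<noteq> kb" for j jb k kb
  proof -
    note jh = jac_hat[OF hA BA that uB uA u1A[OF that(2,5)]]
    show "is_runit (z jb kb)" unfolding z_def by (rule jh(1))
    have "P j k = (B 0 j * uinv (B k j) * B k 0) * uinv (B 0 0)" unfolding Pe by simp
    also have "\<dots> = (B 0 0 - uinv (z jb kb)) * uinv (B 0 0)" unfolding jh(2) z_def ..
    also have "\<dots> = 1 - uinv (z jb kb) * uinv (B 0 0)" by (simp add: algebra_simps runit_inv uB)
    finally show "P j k - 1 = uinv (z jb kb) * (- uinv (B 0 0))" by simp
  qed
  have uz: "is_runit (z u v)" if "u \<noteq> 0" "v \<noteq> 0" for u v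
  proof -
    have "u + u \<noteq> 0" "u + u \<noteq> u" using that three_cases[of u] by (elim disjE; simp)+
    moreover have "v + v \<noteq> 0" "v + v \<noteq> v" using that three_cases[of v] by (elim disjE; simp)+
    ultimately show ?thesis using Pblk(2)[of "u+u" u "v+v" v] that by simp
  qed
  have hH: "hat H" unfolding hat_def H_def using A0 by (simp add: runit_one)
  have zH: "inv2 (z 1 1) (z 2 1) (z 1 2) (z 2 2)"
  proof -
    have "inv2 (H 1 1 - 1) (H 1 2 - 1) (H 2 1 - 1) (H 2 2 - 1)"
      using hat_conv[OF hH HC CH] unfolding inv2_def by blast
    from inv2_neg[OF this] show ?thesis unfolding H_def z_def by simp
  qed
  have n0: "(1::3) \<noteq> 0" "(2::3) \<noteq> 0" "(1::3) \<noteq> 2" "(2::3) \<noteq> 1" by simp_all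
  have invP: "mat_invertible P"
  proof (rule hat_fwd[OF hP])
    have "inv2 (uinv (z 2 2)) (uinv (z 2 1)) (uinv (z 1 2)) (uinv (z 1 1))"
      using inv2_anti[OF zH] uz n0 by simp
    from inv2_scale[OF this runit_neg(1)[OF runit_uinv[OF uB]]]
    show "inv2 (P 1 1 - 1) (P 1 2 - 1) (P 2 1 - 1) (P 2 2 - 1)"
      using Pblk(1)[of 1 2 1 2] Pblk(1)[of 1 2 2 1] Pblk(1)[of 2 1 1 2] Pblk(1)[of 2 1 2 1] n0 by simp
  qed
  define Q where "Q = minv P"
  have PQ: "mmult P Q = mone" and QP: "mmult Q P = mone" using mat_inv_minv[OF invP] unfolding Q_def by auto
  have uQ: "is_runit (Q j k)" for j k
  proof (rule inv_entry_unit[OF PQ QP])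
    have "inv2 (B (j+1) (k+1)) (B (j+1) (k+2)) (B (j+2) (k+1)) (B (j+2) (k+2))"
      by (rule inv_sub_inv[OF AB BA uA])
    from inv2_J2[OF this uB uB uB uB]
    have "inv2 (uinv (B (j+1) (k+1))) (uinv (B (j+2) (k+1))) (uinv (B (j+1) (k+2))) (uinv (B (j+2) (k+2)))" .
    then have "inv2 (B 0 (k+1) * uinv (B (j+1) (k+1)) * (B (j+1) 0 * uinv (B 0 0)))
        (B 0 (k+1) * uinv (B (j+2) (k+1)) * (B (j+2) 0 * uinv (B 0 0)))
        (B 0 (k+2) * uinv (B (j+1) (k+2)) * (B (j+1) 0 * uinv (B 0 0)))
        (B 0 (k+2) * uinv (B (j+2) (k+2)) * (B (j+2) 0 * uinv (B 0 0)))"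
      by (rule inv2_diag) (simp_all add: uB runit_mult runit_uinv)
    then show "inv2 (P (k+1) (j+1)) (P (k+1) (j+2)) (P (k+2) (j+1)) (P (k+2) (j+2))"
      unfolding Pe by (simp add: mult.assoc)
  qed
  \<comment> \<open>Kontsevich relation\<close>
  define d where "d = (\<lambda>l. B l 1 * (A 1 (l+1) - A 1 (l+2)) * C 0 l)"
  have HC': "mmult (\<lambda>j k. uinv (A k j)) C = mone" using HC unfolding H_def .
  have od: "(\<Sum>l\<in>UNIV. uinv (B l j) * d l * uinv (C k l)) = 0" if "j \<noteq> k" for j k
    unfolding d_def by (rule offdiag_ex[OF hA BA HC' uA uB uC that])
  define W where "W = (\<lambda>l k. B 0 0 * uinv (B l 0) * d l * uinv (C k l))"
  define mu where "mu = (\<lambda>k. mmult P W k k)"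
  have PW: "mmult P W = (\<lambda>j k. if j = k then mu k else 0)"
  proof -
    have "mmult P W j k = 0" if "j \<noteq> k" for j k
    proof -
      have "mmult P W j k = (\<Sum>l\<in>UNIV. B 0 j * (uinv (B l j) * d l * uinv (C k l)))"
        unfolding mmult_def Pe W_def by (simp add: mult.assoc runit_cancel runit_inv uB)
      also have "\<dots> = B 0 j * (\<Sum>l\<in>UNIV. uinv (B l j) * d l * uinv (C k l))" by (simp add: sum_distrib_left)
      also have "\<dots> = 0" using od[OF that] by simp
      finally show ?thesis .
    qed
    then show ?thesis unfolding mu_def by (auto simp: fun_eq_iff)
  qed
  have WQ: "W l k = Q l k * mu k" for l k
  proof -
    have "W = mmult (mmult Q P) W" using QP by (simp add: mmult_mone)
    also have "\<dots> = mmult Q (mmult P W)" by (simp add: mmult_assoc)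
    finally have "W l k = mmult Q (\<lambda>j k. if j = k then mu k else 0) l k" unfolding PW by simp
    also have "\<dots> = Q l k * mu k"
      using three_cases[of k] by (elim disjE) (simp_all add: mmult_entry)
    finally show ?thesis .
  qed
  have ud0: "is_runit (d 0)" unfolding d_def using uA12 uB uC by (simp add: num3 runit_mult)
  have W0: "W 0 k = d 0 * uinv (C k 0)" for k unfolding W_def by (simp add: runit_inv uB)
  have umu: "is_runit (mu k)" for k
  proof -
    have "mu k = uinv (Q 0 k) * W 0 k" using WQ[of 0 k] by (simp add: runit_cancel uQ)
    then show ?thesis unfolding W0 by (simp add: runit_mult runit_uinv uQ ud0 uC)
  qed
  have uW: "is_runit (W l k)" for l k unfolding WQ by (simp add: runit_mult uQ umu)
  have Qe: "Q l k = W l k * uinv (mu k)" for l k unfolding WQ by (simp add: mult.assoc runit_inv umu)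
  have ud: "is_runit (d l)" for l
  proof -
    have "d l = B l 0 * uinv (B 0 0) * W l 0 * C 0 l"
      unfolding W_def by (simp add: mult.assoc runit_cancel runit_inv uB uC)
    then show ?thesis by (simp add: runit_mult runit_uinv uB uC uW)
  qed
  define LQ where "LQ = LambdaL Q"
  have LQe: "LQ k j = d 0 * uinv (C 0 0) * C 0 k * uinv (C j k) * C j 0 * uinv (d 0)" for k j
  proof -
    have iq: "uinv (Q l m) = mu m * uinv (W l m)" for l m
      by (rule uinv_unique) (simp_all add: Qe mult.assoc runit_cancel runit_inv uW umu)
    have iw: "uinv (W l m) = C m l * uinv (d l) * B l 0 * uinv (B 0 0)" for l m
      by (rule uinv_unique) (simp_all add: W_def mult.assoc runit_cancel runit_inv uB uC ud)
    have "LQ k j = W 0 0 * uinv (W k 0) * W k j * uinv (W 0 j)"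
      unfolding LQ_def LambdaL_def iq unfolding Qe
      by (simp add: mult.assoc runit_cancel runit_inv umu)
    also have "\<dots> = d 0 * uinv (C 0 0) * C 0 k * uinv (C j k) * C j 0 * uinv (d 0)"
      unfolding iw unfolding W_def
      by (simp add: mult.assoc runit_cancel runit_inv uB ud)
    finally show ?thesis .
  qed
  have uLQ: "is_runit (LQ k j)" for k j unfolding LQe by (simp add: runit_mult runit_uinv uC ud)
  define R where "R = LambdaR C"
  have PhiP: "Phi P = Some (conj_mat (uinv (d 0)) R)"
  proof -
    have JP: "J P = Some (\<lambda>j k. uinv (Q k j))"
      unfolding J_def pcomp_def J1_def J2_def Q_def[symmetric] all_units_def using invP uQ by simp
    have "all_units LQ" unfolding all_units_def using uLQ by blast
    then have "Phi P = Some (\<lambda>j k. uinv (LQ k j))"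
      unfolding Phi_def using JP hP auP by (simp add: J2_def LQ_def Q_def)
    moreover have "(\<lambda>j k. uinv (LQ k j)) = conj_mat (uinv (d 0)) R"
    proof -
      have "uinv (LQ k j) = d 0 * (uinv (C j 0) * C j k * uinv (C 0 k) * C 0 0) * uinv (d 0)" for j k
        by (rule uinv_unique) (simp_all add: LQe mult.assoc runit_cancel runit_inv uC ud)
      then show ?thesis unfolding conj_mat_def R_def LambdaR_def by (simp add: fun_eq_iff uinv_uinv ud)
    qed
    ultimately show ?thesis by simp
  qed
  have Phi2A: "Phi2 A = Some (conj_mat (uinv (d 0)) R)"
    unfolding Phi2_def pcomp_def PhiA using PhiP by simp
  have PhiinvA: "Phi_inv A = Some R"
  proof -
    have "Jinv A = Some C" unfolding Jinv_def pcomp_def J2A J1_def C_def using invH by simp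
    then show ?thesis unfolding Phi_inv_def R_def using hA auC by simp
  qed
  show ?thesis
    using Phi2A PhiinvA diag_conj[OF runit_uinv[OF ud0], of R] runit_uinv[OF ud0] by blast
qed

end
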